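(* Every conserved interval $I$ of $\mathcal{P}$ admits a unique inclusion-maximal set of frontiers, denoted $F_I$. Moreover, every conserved interval $I$ of $\mathcal{P}$ with $|I|\geq 2$ satisfies one of the following: (1) $I$ is strong; (2) $I$ is weak and there exist a unique strong conserved interval $J$ of $\mathcal{P}$ and two elements $f_i,f_j\in F_J$ with $f_i<f_j$ such that $I=(f_i..f_j)$; moreover, in this case $F_I=F_J\cap I$ and $J=\mathrm{Container}(I)$.
   Context: Let $n\geq 2$ and let $\mathcal{P}=\{P_1,\ldots,P_K\}$ be signed permutations of $\{1,\ldots,n\}$: each $P_k$ is an ordering of $1,\ldots,n$ in which each element carries a sign $+$ or $-$. Assume $P_1=(+1,+2,\ldots,+n)$ and that every $P_k$ has first element $+1$ and last element $+n$. For integers $i\leq j$ write $(i..j)=\{i,\ldots,j\}$. A conserved interval of $\mathcal{P}$ is either a singleton, or a set $(a..c)$ with $a<c$ which (ignoring signs) occupies consecutive positions in every $P_k$ and which, in every $P_k$, has either $+a$ at its left end and $+c$ at its right end, or $-c$ at its left end and $-a$ at its right end. Two intervals $(i..j)$ and $(k..l)$ overlap if $i<k\leq j<l$ or $k<i\leq l<j$. A conserved interval is strong if it has at least two elements and overlaps no other conserved interval; otherwise it is weak. For a conserved interval $I=(a..c)$, a set $\{f_1,\ldots,f_k\}$ with $a=f_1<\cdots<f_k=c$ is a set of frontiers of $I$ if $(f_i..f_j)$ is a conserved interval for all $1\leq i<j\leq k$. For a conserved interval $I$, $\mathrm{Container}(I)$ is the smallest strong conserved interval containing $I$ (it exists since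 $(1..n)$ is strong). *)

theory Defs
  imports Main
begin

text \<open>A signed permutation of {1..n} is a list of nonzero integers: the entry x
  stands for the element |x| carrying sign + if x > 0 and sign - if x < 0.\<close>

definition signed_perm :: "nat \<Rightarrow> int list \<Rightarrow> bool" where
  "signed_perm n P \<longleftrightarrow> length P = n \<and> distinct (map abs P) \<and> abs ` set P = {1..int n}"

text \<open>A family is a list Ps of signed permutations, P_1 = hd Ps.\<close>

definition conserved :: "nat \<Rightarrow> int list list \<Rightarrow> int set \<Rightarrow> bool" where
  "conserved n Ps I \<longleftrightarrow>
     (\<exists>a. a \<in> {1..int n} \<and> I = {a}) \<or>
     (\<exists>a c. a < c \<and> I = {a..c} \<and>
        (\<forall>P\<in>set Ps. \<exists>s. (let w = take (nat (c - a) + 1) (drop s P) in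
            length w = nat (c - a) + 1 \<and> abs ` set w = {a..c} \<and>
            ((hd w = a \<and> last w = c) \<or> (hd w = - c \<and> last w = - a)))))"

definition overlap :: "int set \<Rightarrow> int set \<Rightarrow> bool" where
  "overlap I J \<longleftrightarrow> (\<exists>i j k l. i \<le> j \<and> k \<le> l \<and> I = {i..j} \<and> J = {k..l} \<and>
      ((i < k \<and> k \<le> j \<and> j < l) \<or> (k < i \<and> i \<le> l \<and> l < j)))"

definition strong :: "nat \<Rightarrow> int list list \<Rightarrow> int set \<Rightarrow> bool" where
  "strong n Ps I \<longleftrightarrow> conserved n Ps I \<and> card I \<ge> 2 \<and>
     \<not> (\<exists>J. conserved n Ps J \<and> overlap I J)"

definition weak :: "nat \<Rightarrow> int list list \<Rightarrow> int set \<Rightarrow> bool" where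
  "weak n Ps I \<longleftrightarrow> conserved n Ps I \<and> \<not> strong n Ps I"

definition frontiers :: "nat \<Rightarrow> int list list \<Rightarrow> int set \<Rightarrow> int set \<Rightarrow> bool" where
  "frontiers n Ps I F \<longleftrightarrow> finite F \<and> F \<noteq> {} \<and> I = {Min F..Max F} \<and>
     (\<forall>f\<in>F. \<forall>g\<in>F. f < g \<longrightarrow> conserved n Ps {f..g})"

definition max_frontiers :: "nat \<Rightarrow> int list list \<Rightarrow> int set \<Rightarrow> int set \<Rightarrow> bool" where
  "max_frontiers n Ps I F \<longleftrightarrow> frontiers n Ps I F \<and>
     \<not> (\<exists>F'. frontiers n Ps I F' \<and> F \<subset> F')"

definition FI :: "nat \<Rightarrow> int list list \<Rightarrow> int set \<Rightarrow> int set" where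
  "FI n Ps I = (THE F. max_frontiers n Ps I F)"

definition is_container :: "nat \<Rightarrow> int list list \<Rightarrow> int set \<Rightarrow> int set \<Rightarrow> bool" where
  "is_container n Ps I J \<longleftrightarrow> strong n Ps J \<and> I \<subseteq> J \<and>
     (\<forall>J'. strong n Ps J' \<and> I \<subseteq> J' \<longrightarrow> J \<subseteq> J')"

end

theory Submission imports Defs begin

definition cw :: "int list \<Rightarrow> int \<Rightarrow> int \<Rightarrow> bool" where
"cw P a c \<longleftrightarrow> (\<exists>s t. s \<le> t \<and> t < length P \<and> (\<lambda>i. \<bar>P!i\<bar>) ` {s..t} = {a..c} \<and>
   ((P!s = a \<and> P!t = c) \<or> (P!s = -c \<and> P!t = -a)))"

lemma pos_unique:
  assumes "distinct (map abs P)" "i < length P" "j < length P" "\<bar>P!i\<bar> = \<bar>P!j\<bar>"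
  shows "i = j"
  using assms by (metis distinct_conv_nth length_map nth_map)

lemma inj_pos: "distinct (map abs P) \<Longrightarrow> inj_on (\<lambda>i. \<bar>P!i\<bar>) {..<length P}"
  by (auto simp: inj_on_def intro: pos_unique)

lemma nz: "0 \<notin> set P \<Longrightarrow> i < length P \<Longrightarrow> P!i \<noteq> 0"
  by (metis nth_mem)

lemma cw_pos:
  assumes "0 \<notin> set P" "cw P a c" shows "0 < a \<and> a \<le> c"
proof -
  obtain s t where w: "s \<le> t" "t < length P" "(\<lambda>i. \<bar>P!i\<bar>) ` {s..t} = {a..c}"
    using assms(2) unfolding cw_def by blast
  have "\<bar>P!s\<bar> \<in> {a..c}" using w by auto
  hence "a \<le> c" by auto
  moreover have "a \<in> (\<lambda>i. \<bar>P!i\<bar>) ` {s..t}" using w \<open>a \<le> c\<close> by auto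
  then obtain i where "i \<in> {s..t}" "a = \<bar>P!i\<bar>" by auto
  hence "0 < a" using nz[OF assms(1), of i] w by auto
  ultimately show ?thesis by auto
qed

lemma cw_L2:
  assumes D: "distinct (map abs P)" "0 \<notin> set P" and c1: "cw P a b" and c2: "cw P b c"
    and ab: "a < b" and bc: "b < c"
  shows "cw P a c"
proof -
  obtain s1 t1 where w1: "s1 \<le> t1" "t1 < length P" "(\<lambda>i. \<bar>P!i\<bar>) ` {s1..t1} = {a..b}"
    and o1: "(P!s1 = a \<and> P!t1 = b) \<or> (P!s1 = -b \<and> P!t1 = -a)"
    using c1 unfolding cw_def by blast
  obtain s2 t2 where w2: "s2 \<le> t2" "t2 < length P" "(\<lambda>i. \<bar>P!i\<bar>) ` {s2..t2} = {b..c}"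
    and o2: "(P!s2 = b \<and> P!t2 = c) \<or> (P!s2 = -c \<and> P!t2 = -b)"
    using c2 unfolding cw_def by blast
  have a0: "0 < a" using cw_pos[OF D(2) c1] by simp
  show ?thesis using o1
  proof
    assume A: "P!s1 = a \<and> P!t1 = b"
    have B: "P!s2 = b \<and> P!t2 = c"
    proof (rule ccontr)
      assume "\<not> ?thesis"
      hence "P!t2 = -b" using o2 by auto
      hence "t2 = t1" using pos_unique[OF D(1), of t2 t1] A w1 w2 by auto
      thus False using A \<open>P!t2 = -b\<close> a0 ab by auto
    qed
    hence "s2 = t1" using pos_unique[OF D(1), of s2 t1] A w1 w2 by auto
    have "{s1..t2} = {s1..t1} \<union> {t1..t2}" using w1 w2 \<open>s2 = t1\<close> by auto
    hence "(\<lambda>i. \<bar>P!i\<bar>) ` {s1..t2} = {a..c}" using w1 w2 \<open>s2 = t1\<close> ab bc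
      by (simp add: image_Un) auto
    thus ?thesis unfolding cw_def using A B w1 w2 \<open>s2 = t1\<close>
      by (intro exI[of _ s1] exI[of _ t2]) auto
  next
    assume A: "P!s1 = -b \<and> P!t1 = -a"
    have B: "P!s2 = -c \<and> P!t2 = -b"
    proof (rule ccontr)
      assume "\<not> ?thesis"
      hence "P!s2 = b" using o2 by auto
      hence "s2 = s1" using pos_unique[OF D(1), of s2 s1] A w1 w2 by auto
      thus False using A \<open>P!s2 = b\<close> a0 ab by auto
    qed
    hence "t2 = s1" using pos_unique[OF D(1), of t2 s1] A w1 w2 by auto
    have "{s2..t1} = {s2..s1} \<union> {s1..t1}" using w1 w2 \<open>t2 = s1\<close> by auto
    hence "(\<lambda>i. \<bar>P!i\<bar>) ` {s2..t1} = {a..c}" using w1 w2 \<open>t2 = s1\<close> ab bc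
      by (simp add: image_Un) auto
    thus ?thesis unfolding cw_def using A B w1 w2 \<open>t2 = s1\<close>
      by (intro exI[of _ s2] exI[of _ t1]) auto
  qed
qed

lemma img_win:
  assumes D: "distinct (map abs P)" and "X \<subseteq> {..<length P}" "Y \<subseteq> {..<length P}"
  shows "(\<lambda>i. \<bar>P!i\<bar>) ` (X - Y) = (\<lambda>i. \<bar>P!i\<bar>) ` X - (\<lambda>i. \<bar>P!i\<bar>) ` Y"
  using inj_on_image_set_diff[OF inj_pos[OF D]] assms by blast

lemma img_int:
  assumes D: "distinct (map abs P)" and "X \<subseteq> {..<length P}" "Y \<subseteq> {..<length P}"
  shows "(\<lambda>i. \<bar>P!i\<bar>) ` (X \<inter> Y) = (\<lambda>i. \<bar>P!i\<bar>) ` X \<inter> (\<lambda>i. \<bar>P!i\<bar>) ` Y"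
  using inj_on_image_Int[OF inj_pos[OF D]] assms by blast

lemma img_diff_iv:
  assumes D: "distinct (map abs P)" and "t < length P" "t' < length P"
  shows "(\<lambda>i. \<bar>P!i\<bar>) ` ({s..t} - {s'..t'}) = (\<lambda>i. \<bar>P!i\<bar>) ` {s..t} - (\<lambda>i. \<bar>P!i\<bar>) ` {s'..t'}"
  by (rule img_win[OF D]) (use assms in auto)

lemma img_int_iv:
  assumes D: "distinct (map abs P)" and "t < length P" "t' < length P"
  shows "(\<lambda>i. \<bar>P!i\<bar>) ` ({s..t} \<inter> {s'..t'}) = (\<lambda>i. \<bar>P!i\<bar>) ` {s..t} \<inter> (\<lambda>i. \<bar>P!i\<bar>) ` {s'..t'}"
  by (rule img_int[OF D]) (use assms in auto)

lemma cw_L1: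
  assumes D: "distinct (map abs P)" "0 \<notin> set P" and c1: "cw P a b" and c2: "cw P a c"
    and ab: "a < b" and bc: "b < c"
  shows "cw P b c"
proof -
  obtain s1 t1 where w1: "s1 \<le> t1" "t1 < length P" "(\<lambda>i. \<bar>P!i\<bar>) ` {s1..t1} = {a..b}"
    and o1: "(P!s1 = a \<and> P!t1 = b) \<or> (P!s1 = -b \<and> P!t1 = -a)"
    using c1 unfolding cw_def by blast
  obtain s2 t2 where w2: "s2 \<le> t2" "t2 < length P" "(\<lambda>i. \<bar>P!i\<bar>) ` {s2..t2} = {a..c}"
    and o2: "(P!s2 = a \<and> P!t2 = c) \<or> (P!s2 = -c \<and> P!t2 = -a)"
    using c2 unfolding cw_def by blast
  have a0: "0 < a" using cw_pos[OF D(2) c1] by simp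
  show ?thesis using o1
  proof
    assume A: "P!s1 = a \<and> P!t1 = b"
    have B: "P!s2 = a \<and> P!t2 = c"
    proof (rule ccontr)
      assume "\<not> ?thesis"
      hence "P!t2 = -a" using o2 by auto
      hence "t2 = s1" using pos_unique[OF D(1), of t2 s1] A w1 w2 by auto
      thus False using A \<open>P!t2 = -a\<close> a0 ab by auto
    qed
    hence "s2 = s1" using pos_unique[OF D(1), of s2 s1] A w1 w2 by auto
    have "t1 < t2"
    proof (rule ccontr)
      assume "\<not> t1 < t2"
      hence "{s2..t2} \<subseteq> {s1..t1}" using \<open>s2 = s1\<close> by auto
      hence "{a..c} \<subseteq> {a..b}" using w1 w2 by (metis image_mono)
      thus False using ab bc by auto
    qed
    have e: "{t1..t2} = ({s2..t2} - {s1..t1}) \<union> {t1}" using w1 w2 \<open>s2 = s1\<close> \<open>t1<t2\<close> by auto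
    have "(\<lambda>i. \<bar>P!i\<bar>) ` {t1..t2} = ({a..c} - {a..b}) \<union> {b}"
      unfolding e image_Un using A a0 ab w1 w2
      by (simp add: img_diff_iv[OF D(1), of t2 t1 s2 s1] w1(3) w2(3))
    also have "\<dots> = {b..c}" using ab bc by auto
    finally show ?thesis unfolding cw_def using A B w1 w2 \<open>t1 < t2\<close>
      by (intro exI[of _ t1] exI[of _ t2]) auto
  next
    assume A: "P!s1 = -b \<and> P!t1 = -a"
    have B: "P!s2 = -c \<and> P!t2 = -a"
    proof (rule ccontr)
      assume "\<not> ?thesis"
      hence "P!s2 = a" using o2 by auto
      hence "s2 = t1" using pos_unique[OF D(1), of s2 t1] A w1 w2 by auto
      thus False using A \<open>P!s2 = a\<close> a0 ab by auto
    qed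
    hence "t2 = t1" using pos_unique[OF D(1), of t2 t1] A w1 w2 by auto
    have "s2 < s1"
    proof (rule ccontr)
      assume "\<not> s2 < s1"
      hence "{s2..t2} \<subseteq> {s1..t1}" using \<open>t2 = t1\<close> by auto
      hence "{a..c} \<subseteq> {a..b}" using w1 w2 by (metis image_mono)
      thus False using ab bc by auto
    qed
    have e: "{s2..s1} = ({s2..t2} - {s1..t1}) \<union> {s1}" using w1 w2 \<open>t2 = t1\<close> \<open>s2<s1\<close> by auto
    have "(\<lambda>i. \<bar>P!i\<bar>) ` {s2..s1} = ({a..c} - {a..b}) \<union> {b}"
      unfolding e image_Un using A a0 ab w1 w2
      by (simp add: img_diff_iv[OF D(1), of t2 t1 s2 s1] w1(3) w2(3))
    also have "\<dots> = {b..c}" using ab bc by auto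
    finally show ?thesis unfolding cw_def using A B w1 w2 \<open>s2 < s1\<close>
      by (intro exI[of _ s2] exI[of _ s1]) auto
  qed
qed

lemma cw_L3:
  assumes D: "distinct (map abs P)" "0 \<notin> set P" and c1: "cw P a c" and c2: "cw P b d"
    and ab: "a < b" and bc: "b \<le> c" and cd: "c < d"
  shows "cw P a b \<and> cw P c d"
proof -
  obtain s1 t1 where w1: "s1 \<le> t1" "t1 < length P" "(\<lambda>i. \<bar>P!i\<bar>) ` {s1..t1} = {a..c}"
    and o1: "(P!s1 = a \<and> P!t1 = c) \<or> (P!s1 = -c \<and> P!t1 = -a)"
    using c1 unfolding cw_def by blast
  obtain s2 t2 where w2: "s2 \<le> t2" "t2 < length P" "(\<lambda>i. \<bar>P!i\<bar>) ` {s2..t2} = {b..d}"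
    and o2: "(P!s2 = b \<and> P!t2 = d) \<or> (P!s2 = -d \<and> P!t2 = -b)"
    using c2 unfolding cw_def by blast
  have a0: "0 < a" using cw_pos[OF D(2) c1] by simp
  have "c \<in> (\<lambda>i. \<bar>P!i\<bar>) ` {s2..t2}" using w2 bc cd by auto
  then obtain pc where pc: "pc \<in> {s2..t2}" "\<bar>P!pc\<bar> = c" by auto
  have "d \<in> (\<lambda>i. \<bar>P!i\<bar>) ` {s2..t2}" using w2 bc cd by auto
  then obtain pd where pd: "pd \<in> {s2..t2}" "\<bar>P!pd\<bar> = d" by auto
  have pdn: "pd \<notin> {s1..t1}" using w1 pd cd by force
  have "(\<lambda>i. \<bar>P!i\<bar>) ` ({s1..t1} \<inter> {s2..t2}) = {a..c} \<inter> {b..d}"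
    using w1 w2 by (simp only: img_int_iv[OF D(1) w1(2) w2(2)] w1(3) w2(3))
  hence Iv: "(\<lambda>i. \<bar>P!i\<bar>) ` ({s1..t1} \<inter> {s2..t2}) = {b..c}" using ab bc cd by auto
  show ?thesis using o1
  proof
    assume A: "P!s1 = a \<and> P!t1 = c"
    have "pc = t1" using pos_unique[OF D(1), of pc t1] A w1 w2 pc a0 ab bc by auto
    have "s1 \<notin> {s2..t2}"
    proof
      assume "s1 \<in> {s2..t2}" hence "\<bar>P!s1\<bar> \<in> {b..d}" using w2(3) by blast
      thus False using A a0 ab by auto
    qed
    hence "s1 < s2" using pc \<open>pc = t1\<close> w1 by auto
    have "t1 < t2" using pd pdn \<open>s1 < s2\<close> by auto
    have B: "P!s2 = b \<and> P!t2 = d"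
    proof (rule ccontr)
      assume "\<not> ?thesis"
      hence "P!s2 = -d" using o2 by auto
      have "s2 \<in> {s1..t1}" using \<open>s1 < s2\<close> pc \<open>pc = t1\<close> by auto
      hence "\<bar>P!s2\<bar> \<in> {a..c}" using w1(3) by blast
      thus False using \<open>P!s2 = -d\<close> cd by auto
    qed
    have i: "{s1..t1} \<inter> {s2..t2} = {s2..t1}" using \<open>s1 < s2\<close> \<open>t1 < t2\<close> by auto
    have e1: "{s1..s2} = ({s1..t1} - {s2..t1}) \<union> {s2}" using \<open>s1 < s2\<close> pc \<open>pc = t1\<close> by auto
    have e2: "{t1..t2} = ({s2..t2} - {s2..t1}) \<union> {t1}" using \<open>t1 < t2\<close> pc \<open>pc = t1\<close> by auto
    have "(\<lambda>i. \<bar>P!i\<bar>) ` {s1..s2} = ({a..c} - {b..c}) \<union> {b}"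
      unfolding e1 image_Un using B w1 w2 Iv i a0 ab bc
      by (simp add: img_diff_iv[OF D(1), of t1 t1 s1 s2] w1(3) w2(3) Iv[unfolded i])
    also have "\<dots> = {a..b}" using ab bc by auto
    finally have 1: "cw P a b" unfolding cw_def using A B w1 w2 \<open>s1 < s2\<close> \<open>t1 < t2\<close>
      by (intro exI[of _ s1] exI[of _ s2]) auto
    have "(\<lambda>i. \<bar>P!i\<bar>) ` {t1..t2} = ({b..d} - {b..c}) \<union> {c}"
      unfolding e2 image_Un using A w1 w2 Iv i a0 ab bc
      by (simp add: img_diff_iv[OF D(1), of t2 t1 s2 s2] w1(3) w2(3) Iv[unfolded i])
    also have "\<dots> = {c..d}" using bc cd by auto
    finally have 2: "cw P c d" unfolding cw_def using A B w1 w2 \<open>s1 < s2\<close> \<open>t1 < t2\<close>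
      by (intro exI[of _ t1] exI[of _ t2]) auto
    show ?thesis using 1 2 by simp
  next
    assume A: "P!s1 = -c \<and> P!t1 = -a"
    have "pc = s1" using pos_unique[OF D(1), of pc s1] A w1 w2 pc a0 ab bc by auto
    have "t1 \<notin> {s2..t2}"
    proof
      assume "t1 \<in> {s2..t2}" hence "\<bar>P!t1\<bar> \<in> {b..d}" using w2(3) by blast
      thus False using A a0 ab by auto
    qed
    hence "t2 < t1" using pc \<open>pc = s1\<close> w1 by auto
    have "s2 < s1" using pd pdn \<open>t2 < t1\<close> by auto
    have B: "P!s2 = -d \<and> P!t2 = -b"
    proof (rule ccontr)
      assume "\<not> ?thesis"
      hence "P!t2 = d" using o2 by auto
      have "t2 \<in> {s1..t1}" using \<open>t2 < t1\<close> pc \<open>pc = s1\<close> by auto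
      hence "\<bar>P!t2\<bar> \<in> {a..c}" using w1(3) by blast
      thus False using \<open>P!t2 = d\<close> cd by auto
    qed
    have i: "{s1..t1} \<inter> {s2..t2} = {s1..t2}" using \<open>s2 < s1\<close> \<open>t2 < t1\<close> by auto
    have e1: "{t2..t1} = ({s1..t1} - {s1..t2}) \<union> {t2}" using \<open>t2 < t1\<close> pc \<open>pc = s1\<close> by auto
    have e2: "{s2..s1} = ({s2..t2} - {s1..t2}) \<union> {s1}" using \<open>s2 < s1\<close> pc \<open>pc = s1\<close> by auto
    have "(\<lambda>i. \<bar>P!i\<bar>) ` {t2..t1} = ({a..c} - {b..c}) \<union> {b}"
      unfolding e1 image_Un using B w1 w2 Iv i a0 ab bc
      by (simp add: img_diff_iv[OF D(1), of t1 t2 s1 s1] w1(3) w2(3) Iv[unfolded i])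
    also have "\<dots> = {a..b}" using ab bc by auto
    finally have 1: "cw P a b" unfolding cw_def using A B w1 w2 \<open>s2 < s1\<close> \<open>t2 < t1\<close>
      by (intro exI[of _ t2] exI[of _ t1]) auto
    have "(\<lambda>i. \<bar>P!i\<bar>) ` {s2..s1} = ({b..d} - {b..c}) \<union> {c}"
      unfolding e2 image_Un using A w1 w2 Iv i a0 ab bc
      by (simp add: img_diff_iv[OF D(1), of t2 t2 s2 s1] w1(3) w2(3) Iv[unfolded i])
    also have "\<dots> = {c..d}" using bc cd by auto
    finally have 2: "cw P c d" unfolding cw_def using A B w1 w2 \<open>s2 < s1\<close> \<open>t2 < t1\<close>
      by (intro exI[of _ s2] exI[of _ s1]) auto
    show ?thesis using 1 2 by simp
  qed
qed


lemma td_facts: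
  assumes "s + k \<le> length P" "0 < k"
  shows "length (take k (drop s P)) = k"
    and "set (take k (drop s P)) = (\<lambda>i. P!i) ` {s..s+k-1}"
    and "hd (take k (drop s P)) = P!s"
    and "last (take k (drop s P)) = P!(s+k-1)"
proof -
  show l: "length (take k (drop s P)) = k" using assms by simp
  show "set (take k (drop s P)) = (\<lambda>i. P!i) ` {s..s+k-1}"
  proof
    show "set (take k (drop s P)) \<subseteq> (\<lambda>i. P!i) ` {s..s+k-1}"
    proof
      fix x assume "x \<in> set (take k (drop s P))"
      then obtain j where "j < k" "x = take k (drop s P) ! j" using l by (metis in_set_conv_nth)
      hence "x = P ! (s + j)" using assms by simp
      thus "x \<in> (\<lambda>i. P!i) ` {s..s+k-1}" using \<open>j < k\<close> by auto
    qed
    show "(\<lambda>i. P!i) ` {s..s+k-1} \<subseteq> set (take k (drop s P))"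
    proof
      fix x assume "x \<in> (\<lambda>i. P!i) ` {s..s+k-1}"
      then obtain i where i: "i \<in> {s..s+k-1}" "x = P!i" by auto
      hence "x = take k (drop s P) ! (i - s)" using assms by auto
      moreover have "i - s < k" using i assms by auto
      ultimately show "x \<in> set (take k (drop s P))" using l by (metis nth_mem)
    qed
  qed
  show "hd (take k (drop s P)) = P!s" using assms by (simp add: hd_conv_nth)
  show "last (take k (drop s P)) = P!(s+k-1)" using assms
    by (simp add: last_conv_nth)
qed

lemma win_iff:
  assumes D: "distinct (map abs P)" and fg: "f < g"
  shows "(\<exists>s. let w = take (nat (g - f) + 1) (drop s P) in
            length w = nat (g - f) + 1 \<and> abs ` set w = {f..g} \<and>
            ((hd w = f \<and> last w = g) \<or> (hd w = - g \<and> last w = - f))) \<longleftrightarrow> cw P f g"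
proof
  assume "\<exists>s. let w = take (nat (g - f) + 1) (drop s P) in
            length w = nat (g - f) + 1 \<and> abs ` set w = {f..g} \<and>
            ((hd w = f \<and> last w = g) \<or> (hd w = - g \<and> last w = - f))"
  then obtain s where h: "length (take (nat (g - f) + 1) (drop s P)) = nat (g - f) + 1"
    "abs ` set (take (nat (g - f) + 1) (drop s P)) = {f..g}"
    "(hd (take (nat (g - f) + 1) (drop s P)) = f \<and> last (take (nat (g - f) + 1) (drop s P)) = g) \<or>
     (hd (take (nat (g - f) + 1) (drop s P)) = - g \<and> last (take (nat (g - f) + 1) (drop s P)) = - f)"
    unfolding Let_def by blast
  define k where "k = nat (g - f) + 1"
  have sk: "s + k \<le> length P" using h(1) unfolding k_def by auto
  have k0: "0 < k" unfolding k_def by simp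
  note T = td_facts[OF sk k0]
  have "abs ` ((\<lambda>i. P!i) ` {s..s+k-1}) = {f..g}" using h(2) T(2) unfolding k_def by simp
  hence "(\<lambda>i. \<bar>P!i\<bar>) ` {s..s+k-1} = {f..g}" by (simp add: image_image)
  thus "cw P f g" unfolding cw_def using h(3) T(3,4) sk k0 unfolding k_def
    by (intro exI[of _ s] exI[of _ "s + k - 1"]) (auto simp: k_def)
next
  assume "cw P f g"
  then obtain s t where w: "s \<le> t" "t < length P" "(\<lambda>i. \<bar>P!i\<bar>) ` {s..t} = {f..g}"
    and o: "(P!s = f \<and> P!t = g) \<or> (P!s = -g \<and> P!t = -f)" unfolding cw_def by blast
  have "inj_on (\<lambda>i. \<bar>P!i\<bar>) {s..t}" by (rule inj_on_subset[OF inj_pos[OF D]]) (use w in auto)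
  hence "card {s..t} = card {f..g}" using w(3) by (metis card_image)
  hence ct: "Suc t - s = nat (g - f) + 1" using fg by simp
  define k where "k = nat (g - f) + 1"
  have tk: "t = s + k - 1" using ct w(1) unfolding k_def by simp
  have sk: "s + k \<le> length P" using tk w k_def by simp
  have k0: "0 < k" unfolding k_def by simp
  note T = td_facts[OF sk k0]
  have "abs ` set (take k (drop s P)) = {f..g}" unfolding T(2) image_image using w(3) tk by simp
  thus "\<exists>s. let w = take (nat (g - f) + 1) (drop s P) in
            length w = nat (g - f) + 1 \<and> abs ` set w = {f..g} \<and>
            ((hd w = f \<and> last w = g) \<or> (hd w = - g \<and> last w = - f))"
    using T o tk unfolding k_def Let_def by (intro exI[of _ s]) simp
qed

lemma sp_D: "signed_perm n P \<Longrightarrow> distinct (map abs P) \<and> 0 \<notin> set P"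
  unfolding signed_perm_def by force

lemma cons_iff:
  assumes H: "\<forall>P\<in>set Ps. signed_perm n P" and fg: "f < g"
  shows "conserved n Ps {f..g} \<longleftrightarrow> (\<forall>P\<in>set Ps. cw P f g)"
proof -
  have ns: "\<not> (\<exists>a. {f..g} = {a})"
  proof
    assume "\<exists>a. {f..g} = {a}"
    then obtain a where "{f..g} = {a}" by blast
    hence "f \<in> {a}" "g \<in> {a}" using fg by (metis atLeastAtMost_iff order_refl less_imp_le)+
    thus False using fg by simp
  qed
  have "conserved n Ps {f..g} \<longleftrightarrow> (\<forall>P\<in>set Ps. \<exists>s. (let w = take (nat (g - f) + 1) (drop s P) in
            length w = nat (g - f) + 1 \<and> abs ` set w = {f..g} \<and>
            ((hd w = f \<and> last w = g) \<or> (hd w = - g \<and> last w = - f))))"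
    unfolding conserved_def using ns fg by (auto simp: Icc_eq_Icc)
  also have "\<dots> \<longleftrightarrow> (\<forall>P\<in>set Ps. cw P f g)"
    using win_iff[OF _ fg] H sp_D by blast
  finally show ?thesis .
qed


lemma C_L1:
  assumes H: "\<forall>P\<in>set Ps. signed_perm n P" and "a < b" "b < c"
    "conserved n Ps {a..b}" "conserved n Ps {a..c}"
  shows "conserved n Ps {b..c}"
proof -
  have "a < c" using assms by simp
  have "\<forall>P\<in>set Ps. cw P b c"
  proof
    fix P assume P: "P \<in> set Ps"
    have "cw P a b" "cw P a c" using assms(4,5) P cons_iff[OF H assms(2)] cons_iff[OF H \<open>a<c\<close>] by auto
    thus "cw P b c" using cw_L1 sp_D[of n P] H P assms(2,3) by blast
  qed
  thus ?thesis using cons_iff[OF H assms(3)] by simp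
qed

lemma C_L2:
  assumes H: "\<forall>P\<in>set Ps. signed_perm n P" and "a < b" "b < c"
    "conserved n Ps {a..b}" "conserved n Ps {b..c}"
  shows "conserved n Ps {a..c}"
proof -
  have "a < c" using assms by simp
  have "\<forall>P\<in>set Ps. cw P a c"
  proof
    fix P assume P: "P \<in> set Ps"
    have "cw P a b" "cw P b c" using assms(4,5) P cons_iff[OF H assms(2)] cons_iff[OF H assms(3)] by auto
    thus "cw P a c" using cw_L2 sp_D[of n P] H P assms(2,3) by blast
  qed
  thus ?thesis using cons_iff[OF H \<open>a<c\<close>] by simp
qed

lemma C_L3:
  assumes H: "\<forall>P\<in>set Ps. signed_perm n P" and "a < b" "b \<le> c" "c < d"
    "conserved n Ps {a..c}" "conserved n Ps {b..d}"
  shows "conserved n Ps {a..b} \<and> conserved n Ps {c..d}"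
proof -
  have ac: "a < c" "b < d" using assms by auto
  have "\<forall>P\<in>set Ps. cw P a b \<and> cw P c d"
  proof
    fix P assume P: "P \<in> set Ps"
    have "cw P a c" "cw P b d" using assms(5,6) P cons_iff[OF H ac(1)] cons_iff[OF H ac(2)] by auto
    thus "cw P a b \<and> cw P c d" using cw_L3 sp_D[of n P] H P assms(2,3,4) by blast
  qed
  thus ?thesis using cons_iff[OF H assms(2)] cons_iff[OF H assms(4)] by auto
qed

lemma cw_sub:
  assumes "signed_perm n P" "cw P a c" shows "{a..c} \<subseteq> {1..int n}"
proof -
  obtain s t where w: "s \<le> t" "t < length P" "(\<lambda>i. \<bar>P!i\<bar>) ` {s..t} = {a..c}"
    using assms(2) unfolding cw_def by blast
  have "(\<lambda>i. \<bar>P!i\<bar>) ` {s..t} \<subseteq> abs ` set P" using w(2) by (auto intro: nth_mem)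
  thus ?thesis using w assms(1) unfolding signed_perm_def by simp
qed

lemma C_sub:
  assumes H: "\<forall>P\<in>set Ps. signed_perm n P" and "Ps \<noteq> []" "a < c" "conserved n Ps {a..c}"
  shows "{a..c} \<subseteq> {1..int n}"
proof -
  have "hd Ps \<in> set Ps" using assms(2) by simp
  thus ?thesis using assms(4) cons_iff[OF H assms(3)] cw_sub H by blast
qed

definition Sf :: "nat \<Rightarrow> int list list \<Rightarrow> int \<Rightarrow> int \<Rightarrow> int set" where
  "Sf n Ps a c = {f. a \<le> f \<and> f \<le> c \<and> (f = a \<or> conserved n Ps {a..f})}"

lemma Sf_frontiers:
  assumes H: "\<forall>P\<in>set Ps. signed_perm n P" and ac: "a \<le> c" and C: "a < c \<longrightarrow> conserved n Ps {a..c}"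
  shows "frontiers n Ps {a..c} (Sf n Ps a c)"
proof -
  have fin: "finite (Sf n Ps a c)" by (rule finite_subset[of _ "{a..c}"]) (auto simp: Sf_def)
  have aS: "a \<in> Sf n Ps a c" using ac by (simp add: Sf_def)
  have cS: "c \<in> Sf n Ps a c" using ac C by (auto simp: Sf_def)
  have mi: "Min (Sf n Ps a c) = a" using fin aS by (intro Min_eqI) (auto simp: Sf_def)
  have ma: "Max (Sf n Ps a c) = c" using fin cS by (intro Max_eqI) (auto simp: Sf_def)
  have pw: "\<forall>f\<in>Sf n Ps a c. \<forall>g\<in>Sf n Ps a c. f < g \<longrightarrow> conserved n Ps {f..g}"
  proof (intro ballI impI)
    fix f g assume f: "f \<in> Sf n Ps a c" and g: "g \<in> Sf n Ps a c" and fg: "f < g"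
    have cg: "conserved n Ps {a..g}" using f g fg by (auto simp: Sf_def)
    show "conserved n Ps {f..g}"
    proof (cases "f = a")
      case True thus ?thesis using cg by simp
    next
      case False
      hence "a < f" "conserved n Ps {a..f}" using f by (auto simp: Sf_def)
      thus ?thesis using C_L1[OF H _ fg _ cg] by blast
    qed
  qed
  show ?thesis unfolding frontiers_def using fin aS mi ma pw by auto
qed

lemma frontiers_sub:
  assumes F: "frontiers n Ps {a..c} F" and ac: "a \<le> c"
  shows "F \<subseteq> Sf n Ps a c"
proof
  have fin: "finite F" "F \<noteq> {}" and e: "{a..c} = {Min F..Max F}"
    and pw: "\<forall>f\<in>F. \<forall>g\<in>F. f < g \<longrightarrow> conserved n Ps {f..g}" using F unfolding frontiers_def by blast+
  have "Min F \<le> Max F" using fin by simp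
  hence "Min F = a" "Max F = c" using e ac by (auto simp: Icc_eq_Icc)
  fix f assume f: "f \<in> F"
  have "Min F \<le> f" "f \<le> Max F" using f fin by auto
  moreover have "a \<in> F" using Min_in[OF fin] \<open>Min F = a\<close> by simp
  ultimately show "f \<in> Sf n Ps a c" using pw f \<open>Min F = a\<close> \<open>Max F = c\<close>
    unfolding Sf_def by (metis (mono_tags, lifting) mem_Collect_eq order_le_less)
qed

lemma maxf_iff:
  assumes H: "\<forall>P\<in>set Ps. signed_perm n P" and ac: "a \<le> c" and C: "a < c \<longrightarrow> conserved n Ps {a..c}"
  shows "max_frontiers n Ps {a..c} F \<longleftrightarrow> F = Sf n Ps a c"
  using Sf_frontiers[OF assms] frontiers_sub[OF _ ac] unfolding max_frontiers_def
  by blast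

lemma FI_eq:
  assumes H: "\<forall>P\<in>set Ps. signed_perm n P" and ac: "a \<le> c" and C: "a < c \<longrightarrow> conserved n Ps {a..c}"
  shows "FI n Ps {a..c} = Sf n Ps a c"
  unfolding FI_def by (rule the_equality) (use maxf_iff[OF assms] in auto)

lemma cons_form:
  assumes "conserved n Ps I"
  shows "\<exists>a c. a \<le> c \<and> I = {a..c} \<and> (a < c \<longrightarrow> conserved n Ps {a..c})"
proof -
  from assms consider (s) a where "I = {a}" | (i) a c where "a < c" "I = {a..c}"
    unfolding conserved_def by blast
  thus ?thesis
  proof cases
    case s thus ?thesis by (intro exI[of _ a] exI[of _ a]) auto
  next
    case i thus ?thesis using assms by (intro exI[of _ a] exI[of _ c]) auto
  qed
qed

lemma cons_card2:
  assumes "conserved n Ps I" "2 \<le> card I"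
  shows "\<exists>a c. a < c \<and> I = {a..c}"
proof -
  obtain a c where "a \<le> c" "I = {a..c}" using cons_form[OF assms(1)] by blast
  moreover have "a \<noteq> c" using assms(2) \<open>I = {a..c}\<close> by auto
  ultimately show ?thesis by (intro exI[of _ a] exI[of _ c]) auto
qed

lemma ovl_I:
  "i \<le> j \<Longrightarrow> k \<le> l \<Longrightarrow> (i < k \<and> k \<le> j \<and> j < l) \<or> (k < i \<and> i \<le> l \<and> l < j) \<Longrightarrow> overlap {i..j} {k..l}"
  unfolding overlap_def by blast

lemma ovl_D:
  "overlap {i..j} {k..l} \<Longrightarrow> i \<le> j \<Longrightarrow> k \<le> l \<Longrightarrow> (i < k \<and> k \<le> j \<and> j < l) \<or> (k < i \<and> i \<le> l \<and> l < j)"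
  unfolding overlap_def by (auto simp: Icc_eq_Icc)

lemma nested:
  assumes "strong n Ps {p..q}" "conserved n Ps {p'..q'}" "p \<le> q" "p' \<le> q'" "x \<in> {p..q}" "x \<in> {p'..q'}"
  shows "(p \<le> p' \<and> q' \<le> q) \<or> (p' \<le> p \<and> q \<le> q')"
proof -
  have "\<not> overlap {p..q} {p'..q'}" using assms(1,2) unfolding strong_def by blast
  hence no: "\<not>((p < p' \<and> p' \<le> q \<and> q < q') \<or> (p' < p \<and> p \<le> q' \<and> q' < q))"
    using ovl_I[OF assms(3,4)] by blast
  thus ?thesis using assms(5,6) by auto
qed

lemma strong_form:
  assumes "strong n Ps J" shows "\<exists>p q. p < q \<and> J = {p..q}"
  using assms cons_card2 unfolding strong_def by blast

lemma cont:
  assumes H: "\<forall>P\<in>set Ps. signed_perm n P" and S: "strong n Ps {p..q}" and ac: "a < c"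
    and aS: "a \<in> Sf n Ps p q" and cS: "c \<in> Sf n Ps p q"
    and S': "strong n Ps J'" and sub: "{a..c} \<subseteq> J'"
  shows "{p..q} \<subseteq> J'"
proof -
  obtain p' q' where pq': "p' < q'" "J' = {p'..q'}" using strong_form[OF S'] by blast
  have pq: "p \<le> a" "c \<le> q" using aS cS by (auto simp: Sf_def)
  have Cpq: "conserved n Ps {p..q}" using S unfolding strong_def by simp
  have Cq: "conserved n Ps {p'..q'}" using S' pq' unfolding strong_def by simp
  have ain: "a \<in> {p'..q'}" "c \<in> {p'..q'}" using sub pq' ac by auto
  have nest: "(p \<le> p' \<and> q' \<le> q) \<or> (p' \<le> p \<and> q \<le> q')"
    using nested[OF S Cq _ _ _ ain(1)] pq ac pq' by auto
  show ?thesis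
  proof (cases "p' \<le> p \<and> q \<le> q'")
    case True thus ?thesis using pq' by auto
  next
    case False
    hence "p < p' \<or> q' < q" using nest by auto
    thus ?thesis
    proof
      assume "p < p'"
      hence "a \<noteq> p" using ain by auto
      hence "conserved n Ps {p..a}" using aS by (auto simp: Sf_def)
      moreover have "overlap {p'..q'} {p..a}" using \<open>p < p'\<close> ain ac pq' by (intro ovl_I) auto
      ultimately show ?thesis using S' pq' unfolding strong_def by blast
    next
      assume "q' < q"
      hence "c \<noteq> q" using ain by auto
      have "conserved n Ps {p..c}" using cS ac pq by (auto simp: Sf_def)
      hence "conserved n Ps {c..q}" using C_L1[OF H _ _ _ Cpq] \<open>c \<noteq> q\<close> pq ac by force
      moreover have "overlap {p'..q'} {c..q}" using \<open>q' < q\<close> ain ac pq' by (intro ovl_I) auto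
      ultimately show ?thesis using S' pq' unfolding strong_def by blast
    qed
  qed
qed


lemma exist:
  assumes H: "\<forall>P\<in>set Ps. signed_perm n P" and Pne: "Ps \<noteq> []" and ac: "a < c"
    and C: "conserved n Ps {a..c}"
  shows "\<exists>u v. strong n Ps {u..v} \<and> a \<in> Sf n Ps u v \<and> c \<in> Sf n Ps u v"
proof -
  define pcs where "pcs F \<longleftrightarrow> (\<forall>f\<in>F. \<forall>g\<in>F. f < g \<longrightarrow> conserved n Ps {f..g})" for F
  define Fam where "Fam = {F. F \<subseteq> {1..int n} \<and> a \<in> F \<and> c \<in> F \<and> pcs F}"
  have fin: "finite Fam" by (rule finite_subset[of _ "Pow {1..int n}"]) (auto simp: Fam_def)
  have acsub: "{a..c} \<subseteq> {1..int n}" using C_sub[OF H Pne ac C] .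
  have "{a,c} \<in> Fam" using acsub ac C unfolding Fam_def pcs_def by auto
  then obtain F where F: "F \<in> Fam" and mx: "\<forall>G\<in>Fam. F \<le> G \<longrightarrow> F = G"
    using finite_has_maximal[OF fin] by blast
  have F1: "F \<subseteq> {1..int n}" "a \<in> F" "c \<in> F" "pcs F" using F unfolding Fam_def by auto
  have Ffin: "finite F" using F1(1) by (rule finite_subset) simp
  define u where "u = Min F"
  define v where "v = Max F"
  have uF: "u \<in> F" "v \<in> F" using Ffin F1(2) unfolding u_def v_def by (auto intro: Min_in Max_in)
  have bnd: "\<And>f. f \<in> F \<Longrightarrow> u \<le> f \<and> f \<le> v" using Ffin unfolding u_def v_def by auto
  have uv: "u \<le> a" "c \<le> v" using bnd F1 by auto
  hence "u < v" using ac by simp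
  have Cuv: "conserved n Ps {u..v}" using F1(4) uF \<open>u < v\<close> unfolding pcs_def by blast
  have u1: "1 \<le> u" using F1(1) uF by auto
  have noext: "\<And>e. insert e F \<in> Fam \<Longrightarrow> e \<in> F" using mx by blast
  have S: "strong n Ps {u..v}"
    unfolding strong_def
  proof (intro conjI)
    show "conserved n Ps {u..v}" by (rule Cuv)
    show "2 \<le> card {u..v}" using \<open>u < v\<close> by simp
    show "\<not> (\<exists>J. conserved n Ps J \<and> overlap {u..v} J)"
    proof
      assume "\<exists>J. conserved n Ps J \<and> overlap {u..v} J"
      then obtain K where CK: "conserved n Ps K" and OK: "overlap {u..v} K" by blast
      obtain k l where kl: "k \<le> l" "K = {k..l}" using cons_form[OF CK] by blast
      have o: "(u < k \<and> k \<le> v \<and> v < l) \<or> (k < u \<and> u \<le> l \<and> l < v)"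
        using ovl_D[OF OK[unfolded kl(2)] _ kl(1)] \<open>u<v\<close> by simp
      hence "k < l" by auto
      have Ckl: "conserved n Ps {k..l}" using CK kl by simp
      have klsub: "{k..l} \<subseteq> {1..int n}" using C_sub[OF H Pne \<open>k<l\<close> Ckl] .
      from o show False
      proof
        assume A: "u < k \<and> k \<le> v \<and> v < l"
        have Cvl: "conserved n Ps {v..l}" using C_L3[OF H _ _ _ Cuv Ckl] A by blast
        have "pcs (insert l F)" unfolding pcs_def
        proof (intro ballI impI)
          fix f g assume f: "f \<in> insert l F" and g: "g \<in> insert l F" and fg: "f < g"
          show "conserved n Ps {f..g}"
          proof (cases "g = l")
            case True
            hence fF: "f \<in> F" using f fg by auto
            show ?thesis
            proof (cases "f = v")
              case True thus ?thesis using Cvl \<open>g = l\<close> by simp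
            next
              case False
              hence "f < v" using bnd[OF fF] by auto
              moreover have "conserved n Ps {f..v}" using F1(4) fF uF \<open>f < v\<close> unfolding pcs_def by blast
              ultimately show ?thesis using C_L2[OF H _ _ _ Cvl] A \<open>g = l\<close> by blast
            qed
          next
            case False
            hence gF: "g \<in> F" using g by auto
            hence "f \<noteq> l" using bnd[OF gF] A fg by auto
            hence "f \<in> F" using f by auto
            thus ?thesis using F1(4) gF fg unfolding pcs_def by blast
          qed
        qed
        hence "insert l F \<in> Fam" using F1 klsub kl unfolding Fam_def by auto
        hence "l \<in> F" by (rule noext)
        thus False using bnd A by force
      next
        assume A: "k < u \<and> u \<le> l \<and> l < v"
        have Cku: "conserved n Ps {k..u}" using C_L3[OF H _ _ _ Ckl Cuv] A by blast
        have "pcs (insert k F)" unfolding pcs_def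
        proof (intro ballI impI)
          fix f g assume f: "f \<in> insert k F" and g: "g \<in> insert k F" and fg: "f < g"
          show "conserved n Ps {f..g}"
          proof (cases "f = k")
            case True
            hence gF: "g \<in> F" using g fg by auto
            show ?thesis
            proof (cases "g = u")
              case True thus ?thesis using Cku \<open>f = k\<close> by simp
            next
              case False
              hence "u < g" using bnd[OF gF] by auto
              moreover have "conserved n Ps {u..g}" using F1(4) gF uF \<open>u < g\<close> unfolding pcs_def by blast
              ultimately show ?thesis using C_L2[OF H _ _ Cku] A \<open>f = k\<close> by blast
            qed
          next
            case False
            hence fF: "f \<in> F" using f by auto
            hence "g \<noteq> k" using bnd[OF fF] A fg by auto
            hence "g \<in> F" using g by auto
            thus ?thesis using F1(4) fF fg unfolding pcs_def by blast
          qed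
        qed
        hence "insert k F \<in> Fam" using F1 klsub kl unfolding Fam_def by auto
        hence "k \<in> F" by (rule noext)
        thus False using bnd A by force
      qed
    qed
  qed
  have "a \<in> Sf n Ps u v" "c \<in> Sf n Ps u v"
    using F1 uF uv ac unfolding Sf_def pcs_def by (auto simp: order_le_less)
  thus ?thesis using S by blast
qed


lemma keyJ:
  assumes H: "\<forall>P\<in>set Ps. signed_perm n P" and S: "strong n Ps J"
    and E: "\<exists>fi\<in>FI n Ps J. \<exists>fj\<in>FI n Ps J. fi < fj \<and> {a..c} = {fi..fj}"
  shows "\<exists>p q. p < q \<and> J = {p..q} \<and> a \<in> Sf n Ps p q \<and> c \<in> Sf n Ps p q"
proof -
  obtain p q where pq: "p < q" "J = {p..q}" using strong_form[OF S] by blast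
  have "conserved n Ps {p..q}" using S pq unfolding strong_def by simp
  hence FJ: "FI n Ps J = Sf n Ps p q" using FI_eq[OF H, of p q] pq by simp
  obtain fi fj where "fi \<in> Sf n Ps p q" "fj \<in> Sf n Ps p q" "fi < fj" "{a..c} = {fi..fj}"
    using E unfolding FJ by blast
  hence "a \<in> Sf n Ps p q" "c \<in> Sf n Ps p q" by (auto simp: Icc_eq_Icc)
  thus ?thesis using pq by blast
qed

theorem theorem5:
  fixes n :: nat and Ps :: "int list list"
  assumes "n \<ge> 2"
    and "Ps \<noteq> []"
    and "hd Ps = [1..int n]"
    and "\<forall>P\<in>set Ps. signed_perm n P \<and> hd P = 1 \<and> last P = int n"
  shows "(\<forall>I. conserved n Ps I \<longrightarrow> (\<exists>!F. max_frontiers n Ps I F)) \<and>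
         (\<forall>I. conserved n Ps I \<and> card I \<ge> 2 \<longrightarrow>
            strong n Ps I \<or>
            (weak n Ps I \<and>
             (\<exists>!J. strong n Ps J \<and>
                 (\<exists>fi\<in>FI n Ps J. \<exists>fj\<in>FI n Ps J. fi < fj \<and> I = {fi..fj})) \<and>
             (\<forall>J. strong n Ps J \<and>
                 (\<exists>fi\<in>FI n Ps J. \<exists>fj\<in>FI n Ps J. fi < fj \<and> I = {fi..fj}) \<longrightarrow>
                 FI n Ps I = FI n Ps J \<inter> I \<and> is_container n Ps I J)))"
proof (intro conjI allI impI)
  have H: "\<forall>P\<in>set Ps. signed_perm n P" using assms(4) by blast
  have Pne: "Ps \<noteq> []" by (rule assms(2))
  {
    fix I assume "conserved n Ps I"
    then obtain a c where "a \<le> c" "I = {a..c}" "a < c \<longrightarrow> conserved n Ps {a..c}"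
      using cons_form by blast
    thus "\<exists>!F. max_frontiers n Ps I F" using maxf_iff[OF H] by auto
  }
  fix I assume CI: "conserved n Ps I \<and> 2 \<le> card I"
  obtain a c where ac: "a < c" "I = {a..c}" using cons_card2 CI by blast
  have Cac: "conserved n Ps {a..c}" using CI ac by simp
  show "strong n Ps I \<or>
            (weak n Ps I \<and>
             (\<exists>!J. strong n Ps J \<and>
                 (\<exists>fi\<in>FI n Ps J. \<exists>fj\<in>FI n Ps J. fi < fj \<and> I = {fi..fj})) \<and>
             (\<forall>J. strong n Ps J \<and>
                 (\<exists>fi\<in>FI n Ps J. \<exists>fj\<in>FI n Ps J. fi < fj \<and> I = {fi..fj}) \<longrightarrow>
                 FI n Ps I = FI n Ps J \<inter> I \<and> is_container n Ps I J))"
  proof (cases "strong n Ps I")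
    case True thus ?thesis by simp
  next
    case False
    have W: "weak n Ps I" using False CI unfolding weak_def by simp
    obtain u v where uv: "strong n Ps {u..v}" "a \<in> Sf n Ps u v" "c \<in> Sf n Ps u v"
      using exist[OF H Pne ac(1) Cac] by blast
    have "u < v" using uv(1) strong_form by (fastforce simp: Icc_eq_Icc)
    have FJ0: "FI n Ps {u..v} = Sf n Ps u v"
      using FI_eq[OF H, of u v] uv(1) \<open>u<v\<close> unfolding strong_def by simp
    have ex: "strong n Ps {u..v} \<and> (\<exists>fi\<in>FI n Ps {u..v}. \<exists>fj\<in>FI n Ps {u..v}. fi < fj \<and> I = {fi..fj})"
      using uv FJ0 ac by blast
    have un: "J1 = J2" if T1:
      "strong n Ps J1 \<and> (\<exists>fi\<in>FI n Ps J1. \<exists>fj\<in>FI n Ps J1. fi < fj \<and> I = {fi..fj})"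
      and T2: "strong n Ps J2 \<and> (\<exists>fi\<in>FI n Ps J2. \<exists>fj\<in>FI n Ps J2. fi < fj \<and> I = {fi..fj})"
      for J1 J2
    proof -
      obtain p1 q1 where 1: "p1 < q1" "J1 = {p1..q1}" "a \<in> Sf n Ps p1 q1" "c \<in> Sf n Ps p1 q1"
        using keyJ[OF H, of J1 a c] T1 ac by blast
      obtain p2 q2 where 2: "p2 < q2" "J2 = {p2..q2}" "a \<in> Sf n Ps p2 q2" "c \<in> Sf n Ps p2 q2"
        using keyJ[OF H, of J2 a c] T2 ac by blast
      have s1: "{a..c} \<subseteq> J1" using 1 by (auto simp: Sf_def)
      have s2: "{a..c} \<subseteq> J2" using 2 by (auto simp: Sf_def)
      have "J1 \<subseteq> J2" using cont[OF H _ ac(1) 1(3,4) _ s2] T1 T2 1(2) by auto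
      moreover have "J2 \<subseteq> J1" using cont[OF H _ ac(1) 2(3,4) _ s1] T1 T2 2(2) by auto
      ultimately show ?thesis by blast
    qed
    have all: "FI n Ps I = FI n Ps J \<inter> I \<and> is_container n Ps I J" if
      T: "strong n Ps J \<and> (\<exists>fi\<in>FI n Ps J. \<exists>fj\<in>FI n Ps J. fi < fj \<and> I = {fi..fj})" for J
    proof -
      obtain p q where pq: "p < q" "J = {p..q}" "a \<in> Sf n Ps p q" "c \<in> Sf n Ps p q"
        using keyJ[OF H, of J a c] T ac by blast
      have Cpq: "conserved n Ps {p..q}" using T pq unfolding strong_def by simp
      have FJ: "FI n Ps J = Sf n Ps p q" using FI_eq[OF H, of p q] pq Cpq by simp
      have FI': "FI n Ps I = Sf n Ps a c" using FI_eq[OF H, of a c] ac Cac by simp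
      have pa: "p \<le> a" "c \<le> q" "a = p \<or> conserved n Ps {p..a}" using pq by (auto simp: Sf_def)
      have "Sf n Ps a c = Sf n Ps p q \<inter> {a..c}"
      proof (rule set_eqI)
        fix f
        show "f \<in> Sf n Ps a c \<longleftrightarrow> f \<in> Sf n Ps p q \<inter> {a..c}"
        proof
          assume f: "f \<in> Sf n Ps a c"
          show "f \<in> Sf n Ps p q \<inter> {a..c}"
          proof (cases "f = a")
            case True thus ?thesis using pq f by (auto simp: Sf_def)
          next
            case False
            hence fa: "a < f" "conserved n Ps {a..f}" "f \<le> c" using f by (auto simp: Sf_def)
            have "conserved n Ps {p..f}"
            proof (cases "a = p")
              case True thus ?thesis using fa by simp
            next
              case False thus ?thesis using C_L2[OF H _ fa(1) _ fa(2)] pa by force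
            qed
            thus ?thesis using fa pa by (auto simp: Sf_def)
          qed
        next
          assume f: "f \<in> Sf n Ps p q \<inter> {a..c}"
          show "f \<in> Sf n Ps a c"
          proof (cases "f = a")
            case True thus ?thesis using ac by (auto simp: Sf_def)
          next
            case False
            hence fa: "a < f" "f \<le> c" using f by auto
            hence "f \<noteq> p" using pa by auto
            hence Cpf: "conserved n Ps {p..f}" using f by (auto simp: Sf_def)
            have "conserved n Ps {a..f}"
            proof (cases "a = p")
              case True thus ?thesis using Cpf by simp
            next
              case False thus ?thesis using C_L1[OF H _ fa(1) _ Cpf] pa by force
            qed
            thus ?thesis using fa by (auto simp: Sf_def)
          qed
        qed
      qed
      hence 1: "FI n Ps I = FI n Ps J \<inter> I" using FJ FI' ac by simp
      have "is_container n Ps I J" unfolding is_container_def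
      proof (intro conjI allI impI)
        show "strong n Ps J" using T by simp
        show "I \<subseteq> J" using pa pq ac by auto
        fix J' assume "strong n Ps J' \<and> I \<subseteq> J'"
        thus "J \<subseteq> J'" using cont[OF H _ ac(1) pq(3,4), of J'] T pq(2) ac(2) by auto
      qed
      thus ?thesis using 1 by simp
    qed
    show ?thesis using W ex un all by blast
  qed
qed

end
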